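(* Let $\mathcal{A}$ be a class of square arrays as in the context, let $\frac12\le\alpha\le1$, and let $A\in\mathcal{M}^*_{\mathcal{A}}(\alpha)$ be an array of order $n$. If $A_{ij}$ is a singleton, then $|\Psi_{ij}(A)|>\alpha(2n-1)$, and $R_i(A)$ contains more than $(2\alpha-1)n$ symbols that appear only in row $i$ of $A$, and $C_j(A)$ contains more than $(2\alpha-1)n$ symbols that appear only in column $j$ of $A$.
   Context: An array of order $n$ is an $n\times n$ array with a symbol in each cell; an entry is a triple $(i,j,A_{ij})$. A transversal of an $m\times m$ array is a set of $m$ entries, no two agreeing in row, column, or symbol; an array is transversal-free if it has no transversal. A symbol is a singleton if it occurs exactly once in the array and a clone otherwise; $A_{ij}$ is called a singleton/clone according to the symbol in cell $(i,j)$. $R_i(A)$, $C_j(A)$ are the sets of symbols in row $i$ and column $j$; $A(i\mid j)$ is the array obtained by deleting row $i$ and column $j$; $\Psi_{ij}(A)$ is the set of symbols appearing in $A$ but not in $A(i\mid j)$. Let $\mathcal{A}$ be a class of square arrays such that (i) deleting any one row and any one column from an array in $\mathcal{A}$ gives an array in $\mathcal{A}$, and (ii) changing the symbol in one cell of an array in $\mathcal{A}$ to a new symbol appearing nowhere else in the array gives an array in $\mathcal{A}$. For $\frac12\le\alpha\le1$, $\mathcal{M}_{\mathcal{A}}(\alpha)$ is the set of transversal-free arrays in $\mathcal{A}$ whose number of distinct symbols is at least $\alpha$ times the number of cells. $\mathcal{M}^*_{\mathcal{A}}(\alpha)\subseteq\mathcal{M}_{\mathcal{A}}(\alpha)$ consists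 of those $A\in\mathcal{M}_{\mathcal{A}}(\alpha)$ such that no array in $\mathcal{M}_{\mathcal{A}}(\alpha)$ has smaller order than $A$, and no array in $\mathcal{M}_{\mathcal{A}}(\alpha)$ of the same order as $A$ has more distinct symbols than $A$. *)

theory Defs
  imports Main Complex_Main
begin

text \<open>An array of order n is a list of n rows, each a list of n symbols;
  the entry in cell (i,j) (0-based) is A ! i ! j.\<close>

type_synonym 's array = "'s list list"

definition ord_arr :: "'s array \<Rightarrow> nat" where
  "ord_arr A = length A"

definition square_array :: "'s array \<Rightarrow> bool" where
  "square_array A \<longleftrightarrow> (\<forall>r\<in>set A. length r = length A)"

definition entries :: "'s array \<Rightarrow> (nat \<times> nat \<times> 's) set" where
  "entries A = {(i, j, A ! i ! j) | i j. i < length A \<and> j < length A}"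

definition symbols :: "'s array \<Rightarrow> 's set" where
  "symbols A = {A ! i ! j | i j. i < length A \<and> j < length A}"

definition is_transversal :: "'s array \<Rightarrow> (nat \<times> nat \<times> 's) set \<Rightarrow> bool" where
  "is_transversal A T \<longleftrightarrow> T \<subseteq> entries A \<and> finite T \<and> card T = length A \<and>
     (\<forall>e\<in>T. \<forall>e'\<in>T. e \<noteq> e' \<longrightarrow>
        fst e \<noteq> fst e' \<and> fst (snd e) \<noteq> fst (snd e') \<and> snd (snd e) \<noteq> snd (snd e'))"

definition transversal_free :: "'s array \<Rightarrow> bool" where
  "transversal_free A \<longleftrightarrow> \<not> (\<exists>T. is_transversal A T)"

definition occurrences :: "'s array \<Rightarrow> 's \<Rightarrow> nat" where
  "occurrences A s = card {(i, j). i < length A \<and> j < length A \<and> A ! i ! j = s}"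

definition is_singleton :: "'s array \<Rightarrow> 's \<Rightarrow> bool" where
  "is_singleton A s \<longleftrightarrow> occurrences A s = 1"

definition del_rc :: "'s array \<Rightarrow> nat \<Rightarrow> nat \<Rightarrow> 's array" where
  "del_rc A i j = map (\<lambda>r. take j r @ drop (Suc j) r) (take i A @ drop (Suc i) A)"

definition set_cell :: "'s array \<Rightarrow> nat \<Rightarrow> nat \<Rightarrow> 's \<Rightarrow> 's array" where
  "set_cell A i j s = A[i := (A ! i)[j := s]]"

definition Psi :: "'s array \<Rightarrow> nat \<Rightarrow> nat \<Rightarrow> 's set" where
  "Psi A i j = symbols A - symbols (del_rc A i j)"

definition row_syms :: "'s array \<Rightarrow> nat \<Rightarrow> 's set" where
  "row_syms A i = {A ! i ! j | j. j < length A}"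

definition col_syms :: "'s array \<Rightarrow> nat \<Rightarrow> 's set" where
  "col_syms A j = {A ! i ! j | i. i < length A}"

definition row_only_syms :: "'s array \<Rightarrow> nat \<Rightarrow> 's set" where
  "row_only_syms A i = {s \<in> row_syms A i. \<forall>i' j'. i' < length A \<and> j' < length A \<and> A ! i' ! j' = s \<longrightarrow> i' = i}"

definition col_only_syms :: "'s array \<Rightarrow> nat \<Rightarrow> 's set" where
  "col_only_syms A j = {s \<in> col_syms A j. \<forall>i' j'. i' < length A \<and> j' < length A \<and> A ! i' ! j' = s \<longrightarrow> j' = j}"

definition admissible_class :: "'s array set \<Rightarrow> bool" where
  "admissible_class \<A> \<longleftrightarrow>
     (\<forall>A\<in>\<A>. square_array A) \<and>
     (\<forall>A\<in>\<A>. \<forall>i j. i < length A \<and> j < length A \<longrightarrow> del_rc A i j \<in> \<A>) \<and>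
     (\<forall>A\<in>\<A>. \<forall>i j s. i < length A \<and> j < length A \<and> s \<notin> symbols A \<longrightarrow> set_cell A i j s \<in> \<A>)"

definition M_class :: "'s array set \<Rightarrow> real \<Rightarrow> 's array set" where
  "M_class \<A> \<alpha> = {A \<in> \<A>. transversal_free A \<and>
      real (card (symbols A)) \<ge> \<alpha> * real (length A ^ 2)}"

definition M_star :: "'s array set \<Rightarrow> real \<Rightarrow> 's array set" where
  "M_star \<A> \<alpha> = {A \<in> M_class \<A> \<alpha>.
      (\<forall>B\<in>M_class \<A> \<alpha>. length A \<le> length B) \<and>
      (\<forall>B\<in>M_class \<A> \<alpha>. length B = length A \<longrightarrow> card (symbols B) \<le> card (symbols A))}"

end

theory Submission
  imports Defs
begin

definition sk :: "nat \<Rightarrow> nat \<Rightarrow> nat" where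
  "sk i a = (if a < i then a else Suc a)"

lemma sk_inj: "sk i a = sk i b \<Longrightarrow> a = b"
  by (auto simp: sk_def split: if_splits)

lemma sk_neq: "sk i a \<noteq> i"
  by (auto simp: sk_def)

lemma sk_less: "a < n - 1 \<Longrightarrow> i < n \<Longrightarrow> sk i a < n"
  by (auto simp: sk_def)

lemma sk_surj: "i' < n \<Longrightarrow> i' \<noteq> i \<Longrightarrow> i < n \<Longrightarrow> \<exists>a < n - 1. sk i a = i'"
proof (cases "i' < i")
  case True
  assume "i' < n" "i' \<noteq> i" "i < n"
  then show ?thesis using True by (intro exI[of _ i']) (auto simp: sk_def)
next
  case False
  assume "i' < n" "i' \<noteq> i" "i < n"
  then show ?thesis using False by (intro exI[of _ "i' - 1"]) (auto simp: sk_def)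
qed

lemma del_rc_len: "i < length A \<Longrightarrow> length (del_rc A i j) = length A - 1"
  by (simp add: del_rc_def)

lemma del_rc_nth:
  assumes sq: "square_array A" and i: "i < length A" and j: "j < length A"
    and a: "a < length A - 1" and b: "b < length A - 1"
  shows "del_rc A i j ! a ! b = A ! sk i a ! sk j b"
proof -
  have rows: "(take i A @ drop (Suc i) A) ! a = A ! sk i a"
    using i a by (auto simp: sk_def nth_append)
  have len: "length (take i A @ drop (Suc i) A) = length A - 1" using i by simp
  have lr: "length (A ! sk i a) = length A"
    using sq sk_less[OF a i] unfolding square_array_def by auto
  have "del_rc A i j ! a = take j (A ! sk i a) @ drop (Suc j) (A ! sk i a)"
    unfolding del_rc_def using a len rows by (simp del: map_append)
  also have "\<dots> ! b = A ! sk i a ! sk j b"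
    using j b lr by (auto simp: sk_def nth_append)
  finally show ?thesis .
qed

lemma singleton_unique:
  assumes "is_singleton A (A ! i ! j)" "i < length A" "j < length A"
    "i' < length A" "j' < length A" "A ! i' ! j' = A ! i ! j"
  shows "i' = i \<and> j' = j"
proof -
  let ?S = "{(a, b). a < length A \<and> b < length A \<and> A ! a ! b = A ! i ! j}"
  have "card ?S = 1" using assms(1) unfolding is_singleton_def occurrences_def by simp
  then obtain x where "?S = {x}" by (auto simp: card_Suc_eq)
  moreover have "(i, j) \<in> ?S" "(i', j') \<in> ?S" using assms by auto
  ultimately show ?thesis by auto
qed

lemma symbols_eq: "symbols A = (\<lambda>(i, j). A ! i ! j) ` ({..<length A} \<times> {..<length A})"
  unfolding symbols_def by auto

lemma symbols_finite: "finite (symbols A)"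
  unfolding symbols_eq by simp


lemma del_rc_square:
  assumes sq: "square_array A" and i: "i < length A" and j: "j < length A"
  shows "square_array (del_rc A i j)"
  unfolding square_array_def
proof
  fix r assume "r \<in> set (del_rc A i j)"
  then obtain x where x: "x \<in> set (take i A @ drop (Suc i) A)" and r: "r = take j x @ drop (Suc j) x"
    unfolding del_rc_def by (auto simp del: map_append)
  have "x \<in> set A" using x by (auto dest: in_set_takeD in_set_dropD)
  hence "length x = length A" using sq unfolding square_array_def by auto
  thus "length r = length (del_rc A i j)" using r i j del_rc_len[OF i] by simp
qed

lemma del_rc_symbols_sub:
  assumes sq: "square_array A" and i: "i < length A" and j: "j < length A"
  shows "symbols (del_rc A i j) \<subseteq> symbols A"
proof
  fix s assume "s \<in> symbols (del_rc A i j)"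
  then obtain a b where ab: "a < length A - 1" "b < length A - 1" "s = del_rc A i j ! a ! b"
    unfolding symbols_def del_rc_len[OF i] by auto
  hence "s = A ! sk i a ! sk j b" using del_rc_nth[OF sq i j] by simp
  thus "s \<in> symbols A" unfolding symbols_def using sk_less[OF ab(1) i] sk_less[OF ab(2) j] by auto
qed

lemma lift_transversal:
  assumes sq: "square_array A" and i: "i < length A" and j: "j < length A"
    and sing: "is_singleton A (A ! i ! j)"
    and T: "is_transversal (del_rc A i j) T"
  shows "\<exists>T'. is_transversal A T'"
proof -
  let ?B = "del_rc A i j"
  define f where "f = (\<lambda>(a::nat, b::nat, s::'a). (sk i a, sk j b, s))"
  let ?T = "insert (i, j, A ! i ! j) (f ` T)"
  have Tsub: "T \<subseteq> entries ?B" and Tfin: "finite T" and Tcard: "card T = length A - 1"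
    and Tdist: "\<forall>e\<in>T. \<forall>e'\<in>T. e \<noteq> e' \<longrightarrow>
        fst e \<noteq> fst e' \<and> fst (snd e) \<noteq> fst (snd e') \<and> snd (snd e) \<noteq> snd (snd e')"
    using T del_rc_len[OF i] unfolding is_transversal_def by auto
  have injf: "inj f" unfolding f_def inj_def by (auto dest: sk_inj)
  have Tent: "\<And>a b s. (a, b, s) \<in> T \<Longrightarrow> a < length A - 1 \<and> b < length A - 1 \<and> s = A ! sk i a ! sk j b"
  proof -
    fix a b s assume "(a, b, s) \<in> T"
    hence "(a, b, s) \<in> entries ?B" using Tsub by auto
    hence "a < length A - 1" "b < length A - 1" "s = ?B ! a ! b"
      unfolding entries_def del_rc_len[OF i] by auto
    thus "a < length A - 1 \<and> b < length A - 1 \<and> s = A ! sk i a ! sk j b"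
      using del_rc_nth[OF sq i j] by simp
  qed
  have notin: "(i, j, A ! i ! j) \<notin> f ` T" unfolding f_def using sk_neq by (auto simp: eq_commute[of i] eq_commute[of j])
  have "is_transversal A ?T"
    unfolding is_transversal_def
  proof (intro conjI)
    show "?T \<subseteq> entries A"
    proof
      fix e assume "e \<in> ?T"
      then consider "e = (i, j, A ! i ! j)" | a b s where "(a, b, s) \<in> T" "e = (sk i a, sk j b, s)"
        unfolding f_def by auto
      thus "e \<in> entries A"
      proof cases
        case 1 thus ?thesis using i j unfolding entries_def by auto
      next
        case 2 thus ?thesis using Tent[OF 2(1)] sk_less i j unfolding entries_def by fastforce
      qed
    qed
    show "finite ?T" using Tfin by simp
    show "card ?T = length A"
      using Tfin notin card_image[OF inj_on_subset[OF injf subset_UNIV]] Tcard i by simp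
    show "\<forall>e\<in>?T. \<forall>e'\<in>?T. e \<noteq> e' \<longrightarrow>
        fst e \<noteq> fst e' \<and> fst (snd e) \<noteq> fst (snd e') \<and> snd (snd e) \<noteq> snd (snd e')"
    proof (intro ballI impI)
      have new: "sk i a \<noteq> i \<and> sk j b \<noteq> j \<and> s \<noteq> A ! i ! j" if "(a, b, s) \<in> T" for a b s
      proof -
        have e: "a < length A - 1" "b < length A - 1" "s = A ! sk i a ! sk j b" using Tent[OF that] by auto
        have "s \<noteq> A ! i ! j"
        proof
          assume "s = A ! i ! j"
          hence "sk i a = i \<and> sk j b = j"
            using singleton_unique[OF sing i j sk_less[OF e(1) i] sk_less[OF e(2) j]] e(3) by simp
          thus False using sk_neq by auto
        qed
        thus ?thesis using sk_neq by auto
      qed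
      fix e e' assume e: "e \<in> ?T" and e': "e' \<in> ?T" and ne: "e \<noteq> e'"
      show "fst e \<noteq> fst e' \<and> fst (snd e) \<noteq> fst (snd e') \<and> snd (snd e) \<noteq> snd (snd e')"
      proof (cases "e = (i, j, A ! i ! j)")
        case True
        then obtain a b s where "(a, b, s) \<in> T" "e' = (sk i a, sk j b, s)"
          using e' ne unfolding f_def by auto
        thus ?thesis using True new by fastforce
      next
        case False
        then obtain a b s where abs: "(a, b, s) \<in> T" "e = (sk i a, sk j b, s)"
          using e unfolding f_def by auto
        show ?thesis
        proof (cases "e' = (i, j, A ! i ! j)")
          case True thus ?thesis using abs new by fastforce
        next
          case False
          then obtain a' b' s' where abs': "(a', b', s') \<in> T" "e' = (sk i a', sk j b', s')"
            using e' unfolding f_def by auto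
          have "(a, b, s) \<noteq> (a', b', s')" using ne abs abs' by auto
          hence "a \<noteq> a' \<and> b \<noteq> b' \<and> s \<noteq> s'" using Tdist abs(1) abs'(1) by fastforce
          thus ?thesis using abs abs' by (auto dest: sk_inj)
        qed
      qed
    qed
  qed
  thus ?thesis by blast
qed


lemma in_del_symbols:
  assumes sq: "square_array A" and i: "i < length A" and j: "j < length A"
    and "i' < length A" "j' < length A" "i' \<noteq> i" "j' \<noteq> j"
  shows "A ! i' ! j' \<in> symbols (del_rc A i j)"
proof -
  obtain a where a: "a < length A - 1" "sk i a = i'" using sk_surj assms by blast
  obtain b where b: "b < length A - 1" "sk j b = j'" using sk_surj assms by blast
  have "del_rc A i j ! a ! b = A ! i' ! j'" using del_rc_nth[OF sq i j a(1) b(1)] a b by simp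
  thus ?thesis unfolding symbols_def del_rc_len[OF i] using a b by (metis (mono_tags, lifting) mem_Collect_eq)
qed

lemma Psi_row:
  assumes sq: "square_array A" and i: "i < length A" and j: "j < length A"
  shows "Psi A i j \<subseteq> row_only_syms A i \<union> (\<lambda>i'. A ! i' ! j) ` ({..<length A} - {i})"
proof
  fix s assume s: "s \<in> Psi A i j"
  then obtain a b where ab: "a < length A" "b < length A" "s = A ! a ! b"
    unfolding Psi_def symbols_def by auto
  have nB: "s \<notin> symbols (del_rc A i j)" using s unfolding Psi_def by auto
  show "s \<in> row_only_syms A i \<union> (\<lambda>i'. A ! i' ! j) ` ({..<length A} - {i})"
  proof (cases "\<forall>i' j'. i' < length A \<and> j' < length A \<and> A ! i' ! j' = s \<longrightarrow> i' = i")
    case True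
    hence "a = i" using ab by auto
    hence "s \<in> row_syms A i" unfolding row_syms_def using ab by auto
    thus ?thesis using True unfolding row_only_syms_def by auto
  next
    case False
    then obtain i' j' where o: "i' < length A" "j' < length A" "A ! i' ! j' = s" "i' \<noteq> i" by auto
    have "j' = j" using in_del_symbols[OF sq i j o(1,2,4)] nB o(3) by blast
    thus ?thesis using o by auto
  qed
qed

lemma Psi_col:
  assumes sq: "square_array A" and i: "i < length A" and j: "j < length A"
  shows "Psi A i j \<subseteq> col_only_syms A j \<union> (\<lambda>j'. A ! i ! j') ` ({..<length A} - {j})"
proof
  fix s assume s: "s \<in> Psi A i j"
  then obtain a b where ab: "a < length A" "b < length A" "s = A ! a ! b"
    unfolding Psi_def symbols_def by auto
  have nB: "s \<notin> symbols (del_rc A i j)" using s unfolding Psi_def by auto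
  show "s \<in> col_only_syms A j \<union> (\<lambda>j'. A ! i ! j') ` ({..<length A} - {j})"
  proof (cases "\<forall>i' j'. i' < length A \<and> j' < length A \<and> A ! i' ! j' = s \<longrightarrow> j' = j")
    case True
    hence "b = j" using ab by auto
    hence "s \<in> col_syms A j" unfolding col_syms_def using ab by auto
    thus ?thesis using True unfolding col_only_syms_def by auto
  next
    case False
    then obtain i' j' where o: "i' < length A" "j' < length A" "A ! i' ! j' = s" "j' \<noteq> j" by auto
    have "i' = i" using in_del_symbols[OF sq i j o(1,2) _ o(4)] nB o(3) by blast
    thus ?thesis using o by auto
  qed
qed

lemma card_bound:
  assumes "P \<subseteq> R \<union> g ` ({..<n} - {k})" "k < n" "finite R"
  shows "card P \<le> card R + (n - 1)"
proof -
  have "card P \<le> card (R \<union> g ` ({..<n} - {k}))" using assms by (intro card_mono) auto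
  also have "\<dots> \<le> card R + card (g ` ({..<n} - {k}))" by (rule card_Un_le)
  also have "card (g ` ({..<n} - {k})) \<le> card ({..<n} - {k})" by (rule card_image_le) simp
  also have "card ({..<n} - {k}) = n - 1" using assms by simp
  finally show ?thesis by simp
qed

theorem mainTheorem5:
  fixes \<A> :: "'s array set" and \<alpha> :: real and A :: "'s array" and n i j :: nat
  assumes "infinite (UNIV :: 's set)"
    and "admissible_class \<A>"
    and "1/2 \<le> \<alpha>" and "\<alpha> \<le> 1"
    and "A \<in> M_star \<A> \<alpha>"
    and "ord_arr A = n"
    and "i < n" and "j < n"
    and "is_singleton A (A ! i ! j)"
  shows "real (card (Psi A i j)) > \<alpha> * (2 * real n - 1)
    \<and> real (card (row_only_syms A i)) > (2 * \<alpha> - 1) * real n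
    \<and> real (card (col_only_syms A j)) > (2 * \<alpha> - 1) * real n"
proof -
  have len: "length A = n" using assms(6) unfolding ord_arr_def by simp
  have i: "i < length A" and j: "j < length A" using assms(7,8) len by auto
  have AA: "A \<in> \<A>" and tf: "transversal_free A" and big: "real (card (symbols A)) \<ge> \<alpha> * real (n ^ 2)"
    and minimal: "\<forall>B\<in>M_class \<A> \<alpha>. n \<le> length B"
    using assms(5) len unfolding M_star_def M_class_def by auto
  have sq: "square_array A" using assms(2) AA unfolding admissible_class_def by auto
  let ?B = "del_rc A i j"
  have BA: "?B \<in> \<A>" using assms(2) AA i j unfolding admissible_class_def by auto
  have Btf: "transversal_free ?B"
    unfolding transversal_free_def
    using lift_transversal[OF sq i j assms(9)] tf unfolding transversal_free_def by blast
  have Blen: "length ?B = n - 1" using del_rc_len[OF i] len by simp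
  have small: "real (card (symbols ?B)) < \<alpha> * real ((n - 1) ^ 2)"
  proof (rule ccontr)
    assume "\<not> ?thesis"
    hence "?B \<in> M_class \<A> \<alpha>" using BA Btf Blen unfolding M_class_def by auto
    hence "n \<le> n - 1" using minimal Blen by fastforce
    thus False using assms(7) by simp
  qed
  have sub: "symbols ?B \<subseteq> symbols A" by (rule del_rc_symbols_sub[OF sq i j])
  have cPsi: "card (Psi A i j) = card (symbols A) - card (symbols ?B)"
    unfolding Psi_def using card_Diff_subset[OF finite_subset[OF sub symbols_finite] sub] .
  have "card (symbols ?B) \<le> card (symbols A)" using card_mono[OF symbols_finite sub] .
  hence rPsi: "real (card (Psi A i j)) = real (card (symbols A)) - real (card (symbols ?B))"
    using cPsi by simp
  have n1: "real (n - 1) = real n - 1" using assms(7) by simp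
  have "\<alpha> * real (n ^ 2) - \<alpha> * real ((n - 1) ^ 2) = \<alpha> * (2 * real n - 1)"
    unfolding of_nat_power n1 by (simp add: algebra_simps power2_eq_square)
  hence P1: "real (card (Psi A i j)) > \<alpha> * (2 * real n - 1)" using rPsi big small by linarith
  have fin_row: "finite (row_only_syms A i)"
    by (rule finite_subset[OF _ symbols_finite[of A]]) (use i in \<open>fastforce simp: row_only_syms_def row_syms_def symbols_def\<close>)
  have fin_col: "finite (col_only_syms A j)"
    by (rule finite_subset[OF _ symbols_finite[of A]]) (use j in \<open>fastforce simp: col_only_syms_def col_syms_def symbols_def\<close>)
  have "card (Psi A i j) \<le> card (row_only_syms A i) + (n - 1)"
    using card_bound[OF Psi_row[OF sq i j] i fin_row] len by simp
  hence r1: "real (card (Psi A i j)) \<le> real (card (row_only_syms A i)) + real n - 1"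
    using n1 by linarith
  have "card (Psi A i j) \<le> card (col_only_syms A j) + (n - 1)"
    using card_bound[OF Psi_col[OF sq i j] j fin_col] len by simp
  hence c1: "real (card (Psi A i j)) \<le> real (card (col_only_syms A j)) + real n - 1"
    using n1 by linarith
  have key: "\<alpha> * (2 * real n - 1) - real n + 1 \<ge> (2 * \<alpha> - 1) * real n"
    using assms(4) by (simp add: algebra_simps)
  show ?thesis using P1 r1 c1 key by linarith
qed

end
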